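(* Let $f\in F$ be strongly positive. Then $f$ can be expressed uniquely in the form $f=x_{i_n}\cdots x_{i_2}x_{i_1}$ with $n\ge0$, all $i_k\ge1$, and $i_{k+1}\ge i_k-1$ for all $k=1,\dots,n-1$.
   Context: Thompson's group $F=\langle x_0,x_1,x_2,\dots\mid x_nx_k=x_kx_{n+1}\text{ for }k<n\rangle$. An element of $F$ is strongly positive if it lies in the submonoid generated by $x_1,x_2,x_3,\dots$. Uniqueness means uniqueness of the sequence $(i_n,\dots,i_1)$. *)

theory Defs
  imports Main
begin

text \<open>Thompson's group F given by its presentation
  < x0, x1, ... | x_n x_k = x_k x_(n+1) for k < n >.
  Group words are lists of letters (i, True) = x_i and (i, False) = x_i^-1.
  F is the quotient of words by the smallest congruence containing free
  cancellation and the defining relations.\<close>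

type_synonym gword = "(nat \<times> bool) list"

inductive F_eqv :: "gword \<Rightarrow> gword \<Rightarrow> bool" where
  refl: "F_eqv w w"
| sym: "F_eqv u w \<Longrightarrow> F_eqv w u"
| trans: "F_eqv u v \<Longrightarrow> F_eqv v w \<Longrightarrow> F_eqv u w"
| cong: "F_eqv u u' \<Longrightarrow> F_eqv v v' \<Longrightarrow> F_eqv (u @ v) (u' @ v')"
| cancel: "F_eqv [(i, b), (i, \<not> b)] []"
| rel: "k < n \<Longrightarrow> F_eqv [(n, True), (k, True)] [(k, True), (Suc n, True)]"

lemma equivp_F_eqv: "equivp F_eqv"
  by (rule equivpI) (auto simp: reflp_def symp_def transp_def intro: F_eqv.intros)

quotient_type thompsonF = gword / F_eqv
  by (rule equivp_F_eqv)

lift_definition F_one :: thompsonF is "[]" .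

lift_definition F_mult :: "thompsonF \<Rightarrow> thompsonF \<Rightarrow> thompsonF" is "(@)"
  by (rule F_eqv.cong)

lift_definition F_gen :: "nat \<Rightarrow> thompsonF" ("x") is "\<lambda>i. [(i, True)]" .

definition F_word :: "nat list \<Rightarrow> thompsonF" where
  "F_word l = foldr (\<lambda>i g. F_mult (x i) g) l F_one"

definition strongly_positive :: "thompsonF \<Rightarrow> bool" where
  "strongly_positive f \<longleftrightarrow> (\<exists>l. (\<forall>i\<in>set l. 1 \<le> i) \<and> f = F_word l)"

end

theory Submission
  imports Defs "HOL-Library.Stream"
begin

definition ph :: "nat \<Rightarrow> nat \<times> bool stream \<Rightarrow> nat \<times> bool stream" where
  "ph n p = (case p of (i, s) \<Rightarrow> (if i < n then (i, s) else if i = n then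
      (if shd s then (Suc n, stl s) else (n, stl s)) else (Suc i, s)))"

lemma ph_simp[simp]: "ph n (i, s) = (if i < n then (i, s) else if i = n then
      (if shd s then (Suc n, stl s) else (n, stl s)) else (Suc i, s))"
  by (simp add: ph_def)

definition phinv :: "nat \<Rightarrow> nat \<times> bool stream \<Rightarrow> nat \<times> bool stream" where
  "phinv n p = (case p of (i, s) \<Rightarrow> (if i < n then (i, s) else if i = n then (n, False ## s)
      else if i = Suc n then (n, True ## s) else (i - 1, s)))"

lemma phinv_simp[simp]: "phinv n (i, s) = (if i < n then (i, s) else if i = n then (n, False ## s)
      else if i = Suc n then (n, True ## s) else (i - 1, s))"
  by (simp add: phinv_def)

definition letter :: "nat \<times> bool \<Rightarrow> nat \<times> bool stream \<Rightarrow> nat \<times> bool stream" where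
  "letter c = (if snd c then ph (fst c) else phinv (fst c))"

primrec act :: "gword \<Rightarrow> nat \<times> bool stream \<Rightarrow> nat \<times> bool stream" where
  "act [] = id"
| "act (c # w) = act w \<circ> letter c"

lemma act_append: "act (u @ v) = act v \<circ> act u"
  by (induction u) auto

lemma ph_phinv: "ph n (phinv n p) = p"
  by (cases p) auto

lemma phinv_ph: "phinv n (ph n p) = p"
proof (cases p)
  case (Pair i s)
  then show ?thesis by (cases s) auto
qed

lemma rel_act: "k < n \<Longrightarrow> ph k (ph n p) = ph (Suc n) (ph k p)"
proof (cases p)
  case (Pair i s)
  assume "k < n"
  then show ?thesis using Pair by (cases s) auto
qed

lemma act_eqv: "F_eqv u v \<Longrightarrow> act u = act v"
proof (induction rule: F_eqv.induct)
  case (cong u u' v v')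
  then show ?case by (simp add: act_append)
next
  case (cancel i b)
  then show ?case by (cases b) (auto simp: fun_eq_iff ph_phinv phinv_ph letter_def)
next
  case (rel k n)
  then show ?case by (auto simp: fun_eq_iff rel_act letter_def)
qed auto

definition pw :: "nat list \<Rightarrow> gword" where
  "pw l = map (\<lambda>i. (i, True)) l"

lemma F_word_abs: "F_word l = abs_thompsonF (pw l)"
proof (induction l)
  case Nil
  then show ?case by (simp add: F_word_def pw_def F_one_def)
next
  case (Cons a l)
  have "F_word (a # l) = F_mult (x a) (F_word l)" by (simp add: F_word_def)
  also have "\<dots> = abs_thompsonF ([(a, True)] @ pw l)"
    using Cons by (simp add: F_gen_def F_mult.abs_eq)
  finally show ?case by (simp add: pw_def)
qed

lemma F_word_Cons: "F_word (a # l) = F_mult (x a) (F_word l)"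
  by (simp add: F_word_def)

lemma act_pw_Cons: "act (pw (a # l)) = act (pw l) \<circ> ph a"
  by (simp add: pw_def letter_def)

definition nf :: "nat list \<Rightarrow> bool" where
  "nf l \<longleftrightarrow> (\<forall>j. Suc j < length l \<longrightarrow> l ! (Suc j) \<le> l ! j + 1)"

lemma nf_Cons: "nf (a # l) \<longleftrightarrow> nf l \<and> (l \<noteq> [] \<longrightarrow> hd l \<le> a + 1)"
  unfolding nf_def
  apply (cases l)
   apply simp
  apply (auto simp: nth_Cons split: nat.splits)
  done

lemma snd_act_sdrop: "\<exists>k. snd (act (pw l) (i, s)) = sdrop k s"
proof (induction l arbitrary: i s)
  case Nil
  then show ?case by (auto simp: pw_def intro: exI[of _ 0])
next
  case (Cons a l)
  show ?case
  proof (cases "i = a")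
    case True
    obtain k where "snd (act (pw l) (ph a (i, s))) = sdrop k (stl s)"
      using Cons[of "fst (ph a (i, s))" "stl s"] True
      by (cases "shd s") auto
    then show ?thesis by (auto simp: act_pw_Cons intro!: exI[of _ "Suc k"])
  next
    case False
    then have e: "ph a (i, s) = (if i < a then i else Suc i, s)" by simp
    obtain k where "snd (act (pw l) (if i < a then i else Suc i, s)) = sdrop k s"
      using Cons[of "if i < a then i else Suc i" s] by auto
    then have "snd (act (pw l) (ph a (i, s))) = sdrop k s" using e by simp
    then show ?thesis by (auto simp: act_pw_Cons)
  qed
qed

lemma triv_above: "nf l \<Longrightarrow> l \<noteq> [] \<Longrightarrow> hd l < i \<Longrightarrow> snd (act (pw l) (i, s)) = s"
proof (induction l arbitrary: i)
  case Nil
  then show ?case by simp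
next
  case (Cons a l)
  have e: "act (pw (a # l)) (i, s) = act (pw l) (Suc i, s)"
    using Cons.prems by (simp add: act_pw_Cons)
  show ?case
  proof (cases "l = []")
    case True
    then show ?thesis using e by (simp add: pw_def)
  next
    case False
    then show ?thesis using e Cons nf_Cons[of a l] by auto
  qed
qed

lemma act_Nil: "snd (act (pw []) (i, s)) = s"
  by (simp add: pw_def)

definition s0 :: "bool stream" where "s0 = False ## sconst True"

lemma shd_sdrop_sconst: "shd (sdrop k (sconst b)) = b"
  by (induction k) auto

lemma nontriv_head: "snd (act (pw (a # l)) (a, s0)) \<noteq> s0"
proof -
  have "act (pw (a # l)) (a, s0) = act (pw l) (a, sconst True)"
    by (simp add: act_pw_Cons s0_def)
  moreover obtain k where "snd (act (pw l) (a, sconst True)) = sdrop k (sconst True)"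
    using snd_act_sdrop by blast
  ultimately have "shd (snd (act (pw (a # l)) (a, s0))) = True"
    using shd_sdrop_sconst by simp
  moreover have "shd s0 = False" by (simp add: s0_def)
  ultimately show ?thesis by auto
qed

lemma uniq: "nf l1 \<Longrightarrow> nf l2 \<Longrightarrow> act (pw l1) = act (pw l2) \<Longrightarrow> l1 = l2"
proof (induction l1 arbitrary: l2)
  case Nil
  then show ?case
    by (cases l2) (metis act_Nil nontriv_head)+
next
  case (Cons a l1)
  note IH = Cons.IH and P = Cons.prems
  show ?case
  proof (cases l2)
    case Nil
    then show ?thesis using P(3) act_Nil nontriv_head by metis
  next
    case (Cons b l2')
    have "a = b"
    proof (rule ccontr)
      assume "a \<noteq> b"
      then consider "a < b" | "b < a" by linarith
      then show False
      proof cases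
        case 1
        then show ?thesis
        proof -
          have "snd (act (pw (a # l1)) (b, s0)) = s0" using triv_above[of "a # l1" b s0] P(1) 1 by simp
          then show False using nontriv_head[of b l2'] P(3) Cons by simp
        qed
      next
        case 2
        then show ?thesis
        proof -
          have "snd (act (pw (b # l2')) (a, s0)) = s0" using triv_above[of "b # l2'" a s0] P(2) Cons 2 by simp
          then show False using nontriv_head[of a l1] P(3) Cons by simp
        qed
      qed
    qed
    have "act (pw l1) \<circ> ph a = act (pw l2') \<circ> ph a"
      using P(3) Cons \<open>a = b\<close> by (simp add: act_pw_Cons comp_def)
    then have "act (pw l1) = act (pw l2')"
      by (metis (no_types, lifting) comp_apply fun_eq_iff ph_phinv)
    moreover have "nf l1" using P(1) nf_Cons by blast
    moreover have "nf l2'" using P(2) Cons nf_Cons by blast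
    ultimately have "l1 = l2'" using IH by blast
    then show ?thesis using Cons \<open>a = b\<close> by simp
  qed
qed

lemma rel_word: "k < n \<Longrightarrow> F_word (n # k # l) = F_word (k # Suc n # l)"
proof -
  assume "k < n"
  then have "F_eqv ([(n, True), (k, True)] @ pw l) ([(k, True), (Suc n, True)] @ pw l)"
    by (intro F_eqv.cong F_eqv.rel F_eqv.refl)
  then show ?thesis by (simp add: F_word_abs pw_def thompsonF.abs_eq_iff)
qed

lemma prepend:
  "nf l \<Longrightarrow> (\<forall>i\<in>set l. 1 \<le> i) \<Longrightarrow> 1 \<le> a \<Longrightarrow> a \<le> c \<Longrightarrow> (l \<noteq> [] \<longrightarrow> hd l \<le> c + 1) \<Longrightarrow>
   \<exists>m. nf m \<and> (\<forall>i\<in>set m. 1 \<le> i) \<and> F_word m = F_word (a # l) \<and> m \<noteq> [] \<and> hd m \<le> c"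
proof (induction "length l" arbitrary: l a c rule: less_induct)
  case less
  show ?case
  proof (cases "l = [] \<or> hd l \<le> a + 1")
    case True
    have "nf (a # l)" using True less.prems(1,4,5) nf_Cons by auto
    moreover have "\<forall>i\<in>set (a # l). 1 \<le> i" using less.prems(2,3) by simp
    ultimately show ?thesis using less.prems(4) by (intro exI[of _ "a # l"]) simp
  next
    case False
    then obtain b l'' where l: "l = b # l''" and ab: "a + 1 < b"
      by (cases l) auto
    have nfl: "nf l''" "l'' \<noteq> [] \<longrightarrow> hd l'' \<le> b + 1" using less.prems(1) l nf_Cons by auto
    have p2: "\<forall>i\<in>set l''. 1 \<le> i" using less.prems(2) l by simp
    have "length l'' < length l" using l by simp
    from less.hyps[OF this nfl(1) p2 less.prems(3) _ nfl(2)]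
    obtain m where m: "nf m" "\<forall>i\<in>set m. 1 \<le> i" "F_word m = F_word (a # l'')" "m \<noteq> []" "hd m \<le> b"
      using ab by auto
    have "F_word (a # l) = F_word ((b - 1) # a # l'')"
      using rel_word[of a "b - 1" l''] ab l by simp
    also have "\<dots> = F_word ((b - 1) # m)"
      by (simp add: F_word_Cons m(3))
    finally have fw: "F_word ((b - 1) # m) = F_word (a # l)" by simp
    have "nf ((b - 1) # m)" using m(1,4,5) nf_Cons by auto
    moreover have "\<forall>i\<in>set ((b - 1) # m). 1 \<le> i" using m(2) ab by auto
    moreover have "b - 1 \<le> c" using less.prems(5) l by simp
    ultimately show ?thesis using fw by (intro exI[of _ "(b - 1) # m"]) simp
  qed
qed

lemma exist: "(\<forall>i\<in>set l. 1 \<le> i) \<Longrightarrow> \<exists>m. nf m \<and> (\<forall>i\<in>set m. 1 \<le> i) \<and> F_word m = F_word l"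
proof (induction l)
  case Nil
  then show ?case by (intro exI[of _ "[]"]) (simp add: nf_def)
next
  case (Cons a l)
  then obtain m where m: "nf m" "\<forall>i\<in>set m. 1 \<le> i" "F_word m = F_word l" by auto
  obtain m' where "nf m'" "\<forall>i\<in>set m'. 1 \<le> i" "F_word m' = F_word (a # m)"
  proof -
    have "m \<noteq> [] \<longrightarrow> hd m \<le> max a (hd m - 1) + 1" by auto
    moreover have "1 \<le> a" using Cons.prems by auto
    ultimately obtain m' where "nf m'" "\<forall>i\<in>set m'. 1 \<le> i" "F_word m' = F_word (a # m)"
      using prepend[of m a "max a (hd m - 1)"] m(1,2) by auto
    then show ?thesis using that by blast
  qed
  then show ?case using m by (metis F_word_Cons)
qed

theorem theorem4p1p7:
  fixes f :: thompsonF
  assumes "strongly_positive f"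
  shows "\<exists>!l :: nat list. (\<forall>i\<in>set l. 1 \<le> i)
           \<and> (\<forall>j. Suc j < length l \<longrightarrow> l ! (Suc j) \<le> l ! j + 1)
           \<and> f = F_word l"
proof -
  obtain l where l: "\<forall>i\<in>set l. 1 \<le> i" "f = F_word l"
    using assms strongly_positive_def by auto
  obtain m where m: "nf m" "\<forall>i\<in>set m. 1 \<le> i" "F_word m = F_word l"
    using exist[OF l(1)] by auto
  show ?thesis
  proof (rule ex1I[of _ m])
    show "(\<forall>i\<in>set m. 1 \<le> i) \<and> (\<forall>j. Suc j < length m \<longrightarrow> m ! Suc j \<le> m ! j + 1) \<and> f = F_word m"
      using m l nf_def by auto
  next
    fix m'
    assume h: "(\<forall>i\<in>set m'. 1 \<le> i) \<and> (\<forall>j. Suc j < length m' \<longrightarrow> m' ! Suc j \<le> m' ! j + 1) \<and> f = F_word m'"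
    then have "F_word m' = F_word m" using m l by simp
    then have "F_eqv (pw m') (pw m)" by (simp add: F_word_abs thompsonF.abs_eq_iff)
    then have "act (pw m') = act (pw m)" by (rule act_eqv)
    then show "m' = m" using uniq h m(1) nf_def by blast
  qed
qed

end
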